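(* Let $d \ge 1$ and $k \ge 1$ be integers. If $P \subseteq \mathbb{R}^d$ is a convex lattice polytope (all vertices in $\mathbb{Z}^d$) that does not contain a lattice segment of length $k$, then $|P \cap \mathbb{Z}^d| \le k^d$.
   Context: For $x,y \in \mathbb{Z}^d$, the line segment $[x,y]$ is called a lattice segment of length $m-1$ if $|[x,y]\cap \mathbb{Z}^d| = m$. Equivalently, a lattice segment of length $k$ is the convex hull of a set $\{x, x+z, x+2z,\dots,x+kz\}$ with $x,z\in\mathbb{Z}^d$, $z \ne 0$, and $z$ primitive; and $P$ contains a lattice segment of length $k$ if and only if $P$ contains a set $\{x, x+z, \dots, x+kz\}$ with $x,z\in\mathbb{Z}^d$, $z\neq 0$. *)

theory Defs
  imports "HOL-Analysis.Analysis"
begin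

text \<open>Integer lattice points of R^d, with d the cardinality of the finite index type.\<close>
definition lattice_points :: "(real ^ 'n) set" where
  "lattice_points = {x. \<forall>i. x $ i \<in> \<int>}"

definition lattice_polytope :: "(real ^ 'n) set \<Rightarrow> bool" where
  "lattice_polytope P \<longleftrightarrow>
     (\<exists>V. finite V \<and> V \<subseteq> lattice_points \<and> P = convex hull V)"

definition contains_lattice_segment :: "(real ^ 'n) set \<Rightarrow> nat \<Rightarrow> bool" where
  "contains_lattice_segment P k \<longleftrightarrow>
     (\<exists>x z. x \<in> lattice_points \<and> z \<in> lattice_points \<and> z \<noteq> 0 \<and>
            (\<forall>j\<in>{0..k}. x + real j *\<^sub>R z \<in> P))"

end

theory Submission
  imports Defs
begin

lemma lp_int: "x \<in> lattice_points \<Longrightarrow> x $ i = of_int \<lfloor>x $ i\<rfloor>"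
  unfolding lattice_points_def by auto

theorem proposition3p2:
  fixes P :: "(real ^ 'n) set" and k :: nat
  assumes "k \<ge> 1"
    and "lattice_polytope P"
    and "\<not> contains_lattice_segment P k"
  shows "card (P \<inter> lattice_points) \<le> k ^ CARD('n)"
proof (rule ccontr)
  assume H: "\<not> ?thesis"
  define S where "S = P \<inter> lattice_points"
  have fin: "finite S" using H S_def by (metis card.infinite le0)
  have cv: "convex P" using assms(2) unfolding lattice_polytope_def
    using convex_convex_hull by blast
  define f where "f = (\<lambda>x::real^'n. \<lambda>i. \<lfloor>x $ i\<rfloor> mod int k)"
  define T where "T = PiE (UNIV::'n set) (\<lambda>_. {0..<int k})"
  have cT: "card T = k ^ CARD('n)" unfolding T_def by (simp add: card_PiE)
  have fT: "f ` S \<subseteq> T" unfolding T_def f_def using assms(1) by auto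
  have "card (f ` S) \<le> card T" using fT by (intro card_mono) (simp_all add: T_def finite_PiE)
  with H cT S_def have "card (f ` S) < card S" by simp
  hence "\<not> inj_on f S" by (metis card_image less_irrefl)
  then obtain x y where xy: "x \<in> S" "y \<in> S" "x \<noteq> y" "f x = f y"
    unfolding inj_on_def by blast
  have dv: "int k dvd (\<lfloor>y $ i\<rfloor> - \<lfloor>x $ i\<rfloor>)" for i
  proof -
    have "\<lfloor>x $ i\<rfloor> mod int k = \<lfloor>y $ i\<rfloor> mod int k" using xy(4) unfolding f_def by meson
    thus ?thesis by (metis mod_eq_dvd_iff)
  qed
  define w :: "real^'n" where "w = (\<chi> i. of_int ((\<lfloor>y $ i\<rfloor> - \<lfloor>x $ i\<rfloor>) div int k))"
  have xl: "x \<in> lattice_points" and yl: "y \<in> lattice_points" using xy S_def by auto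
  have yeq: "y = x + real k *\<^sub>R w"
  proof (rule vec_eq_iff[THEN iffD2, rule_format])
    fix i
    have "real k * of_int ((\<lfloor>y $ i\<rfloor> - \<lfloor>x $ i\<rfloor>) div int k) = of_int (\<lfloor>y $ i\<rfloor> - \<lfloor>x $ i\<rfloor>)"
      using dv[of i] by (metis dvd_mult_div_cancel of_int_mult of_int_of_nat_eq)
    thus "y $ i = (x + real k *\<^sub>R w) $ i"
      using lp_int[OF xl, of i] lp_int[OF yl, of i] by (simp add: w_def)
  qed
  have wl: "w \<in> lattice_points" unfolding lattice_points_def w_def by simp
  have w0: "w \<noteq> 0" using yeq xy(3) by auto
  have "contains_lattice_segment P k"
    unfolding contains_lattice_segment_def
  proof (intro exI conjI ballI)
    fix j assume j: "j \<in> {0..k}"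
    define t where "t = real j / real k"
    have t01: "0 \<le> t" "t \<le> 1" using j assms(1) by (auto simp: t_def)
    have "x + real j *\<^sub>R w = (1 - t) *\<^sub>R x + t *\<^sub>R y"
      using assms(1) by (simp add: yeq t_def algebra_simps)
    also have "\<dots> \<in> P" using cv xy S_def t01 by (intro convexD_alt) auto
    finally show "x + real j *\<^sub>R w \<in> P" .
  qed (use xl wl w0 in auto)
  with assms(3) show False by simp
qed

end
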